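(* Let $a,b,c,d\ge1$ be integers and let $$M=\begin{bmatrix}a&-1&-1&-1\\-1&b&-1&-1\\-1&-1&c&-1\\-1&-1&-1&d\end{bmatrix}.$$ If $\det M=0$ and $\min\{a,b,c,d\}=3$, then $a=b=c=d=3$. *)

theory Defs
  imports "HOL-Analysis.Analysis"
begin

definition Mmat :: "int \<Rightarrow> int \<Rightarrow> int \<Rightarrow> int \<Rightarrow> int^4^4" where
  "Mmat a b c d = vector [vector [a, -1, -1, -1],
                          vector [-1, b, -1, -1],
                          vector [-1, -1, c, -1],
                          vector [-1, -1, -1, d]]"

end

theory Submission
  imports Defs
begin

lemma det4: "det (Mmat a b c d) = (a+1)*(b+1)*(c+1)*(d+1) - (b+1)*(c+1)*(d+1) - (a+1)*(c+1)*(d+1) - (a+1)*(b+1)*(d+1) - (a+1)*(b+1)*(c+1)"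
proof -
  have f1: "finite {2::4, 3, 4}" "1 \<notin> {2::4, 3, 4}" by auto
  have f2: "finite {3::4, 4}" "2 \<notin> {3::4, 4}" by auto
  have f3: "finite {4::4}" "3 \<notin> {4::4}" by auto
  show ?thesis
    unfolding det_def UNIV_4
    unfolding sum_over_permutations_insert[OF f1]
    unfolding sum_over_permutations_insert[OF f2]
    unfolding sum_over_permutations_insert[OF f3]
    unfolding permutes_sing
    apply (simp add: sign_swap_id permutation_swap_id sign_compose swap_id_eq permutation_compose)
    apply (simp add: Mmat_def vector_def)
    apply (simp add: algebra_simps)
    done
qed

lemma key:
  fixes x y z w :: int
  assumes "x \<ge> 4" "y \<ge> 4" "z \<ge> 4" "w \<ge> 4"
    and "x*y*z*w - y*z*w - x*z*w - x*y*w - x*y*z = 0"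
  shows "x = 4 \<and> y = 4 \<and> z = 4 \<and> w = 4"
proof -
  have e: "(x-4)*(y*z*w) + (y-4)*(x*z*w) + (z-4)*(x*y*w) + (w-4)*(x*y*z) = 0"
    using assms(5) by (simp add: algebra_simps)
  have p1: "y*z*w > 0" "x*z*w > 0" "x*y*w > 0" "x*y*z > 0" using assms(1-4) by auto
  have t1: "(x-4)*(y*z*w) \<ge> 0" using assms(1) p1 by simp
  have t2: "(y-4)*(x*z*w) \<ge> 0" using assms(2) p1 by simp
  have t3: "(z-4)*(x*y*w) \<ge> 0" using assms(3) p1 by simp
  have t4: "(w-4)*(x*y*z) \<ge> 0" using assms(4) p1 by simp
  have "(x-4)*(y*z*w) = 0" "(y-4)*(x*z*w) = 0" "(z-4)*(x*y*w) = 0" "(w-4)*(x*y*z) = 0"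
    using e t1 t2 t3 t4 by linarith+
  then show ?thesis using p1 by auto
qed

theorem lemma3p6:
  fixes a b c d :: int
  assumes "a \<ge> 1" "b \<ge> 1" "c \<ge> 1" "d \<ge> 1"
    and "det (Mmat a b c d) = 0"
    and "Min {a, b, c, d} = 3"
  shows "a = 3 \<and> b = 3 \<and> c = 3 \<and> d = 3"
proof -
  have m: "Min {a, b, c, d} = min a (min b (min c d))" by simp
  have ge: "a \<ge> 3" "b \<ge> 3" "c \<ge> 3" "d \<ge> 3" using assms(6) unfolding m by linarith+
  have "a+1 = 4 \<and> b+1 = 4 \<and> c+1 = 4 \<and> d+1 = 4"
    by (rule key) (use ge assms(5) det4[of a b c d] in auto)
  then show ?thesis by auto
qed

end
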